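(* Let $\mathcal{M}\subset\mathbb{R}^n$ be a locally symmetric $C^2$ submanifold with characteristic permutation $\sigma_*$, and let $\sigma\in\Sigma^n$ be a permutation each of whose cycles is contained either in $F:=\mathbb{N}_n\setminus\mathrm{supp}(\sigma_* )$ or in $\mathrm{supp}(\sigma_* )$. Let $\sigma^F$ (resp. $\sigma^M$) be the restriction of $\sigma$ to $F$ (resp. to $\mathrm{supp}(\sigma_* )$), and $\sigma_*^M$ the restriction of $\sigma_*$ to $\mathrm{supp}(\sigma_* )$. Then: $\sigma\sim\sigma_*$ iff $\sigma^F$ is the identity of $F$ and $P(\sigma^M)=P(\sigma_*^M)$; and $\sigma\prec\!\sim\sigma_*$ iff $\sigma^F$ is not the identity of $F$ and $P(\sigma^M)=P(\sigma_*^M)$.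
   Context: $\Sigma^n$ permutations of $\mathbb{N}_n$ acting by $(\sigma x)_i=x_{\sigma^{-1}(i)}$; $\mathrm{supp}(\sigma)$ the set of non-fixed indices; $P(\sigma)$ the partition into orbits of $\sigma$ (also used for permutations of a subset); $P(x)$ partition by equal coordinates; $\Delta(\sigma)=\{x:P(x)=P(\sigma)\}$. $\sigma\sim\sigma'$ means $P(\sigma)=P(\sigma')$; $\sigma\prec\sigma'$ means $P(\sigma')$ refines $P(\sigma)$ (every set of $P(\sigma)$ is a union of sets of $P(\sigma')$) and $P(\sigma)\ne P(\sigma')$. $\sigma\prec\!\sim\sigma'$ means $\sigma\prec\sigma'$ and every set of $P(\sigma)$ that is not a set of $P(\sigma')$ is a union of singleton sets of $P(\sigma')$. $\mathbb{R}^n_\ge=\{x:x_1\ge\cdots\ge x_n\}$; $B$ open ball. A set $S$ is locally symmetric if $S\cap\mathbb{R}^n_\ge\ne\emptyset$ and each $x\in S$ has $\delta>0$ with $\sigma(S\cap B(x,\delta))=S\cap B(x,\delta)$ for all $y\in S\cap B(x,\delta)$, all $\sigma$ with $\sigma y=y$; a locally symmetric $C^2$ submanifold is a connected $C^2$ submanifold without boundary which is locally symmetric. A characteristic permutation is a $\sigma_*$ with $\mathcal{M}\cap B(y,\rho)\subset\Delta(\sigma_* )$ for some $y\in\mathcal{M}$, $\rho>0$. *)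

theory Defs
  imports "HOL-Analysis.Analysis"
begin

text \<open>Index set N_n is modelled by a finite linearly ordered type 'n; vectors are real^'n.\<close>

definition perm_act :: "('n::finite \<Rightarrow> 'n) \<Rightarrow> real^'n \<Rightarrow> real^'n" where
  "perm_act \<sigma> x = (\<chi> i. x $ (inv \<sigma> i))"

definition psupp :: "('n \<Rightarrow> 'n) \<Rightarrow> 'n set" where
  "psupp \<sigma> = {i. \<sigma> i \<noteq> i}"

definition cyc :: "('n \<Rightarrow> 'n) \<Rightarrow> 'n \<Rightarrow> 'n set" where
  "cyc \<sigma> i = {(\<sigma> ^^ k) i | k. True}"

definition orbit_partition_on :: "('n \<Rightarrow> 'n) \<Rightarrow> 'n set \<Rightarrow> 'n set set" where
  "orbit_partition_on \<sigma> S = cyc \<sigma> ` S"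

definition Pperm :: "('n \<Rightarrow> 'n) \<Rightarrow> 'n set set" where
  "Pperm \<sigma> = orbit_partition_on \<sigma> UNIV"

definition perm_restrict :: "('n \<Rightarrow> 'n) \<Rightarrow> 'n set \<Rightarrow> ('n \<Rightarrow> 'n)" where
  "perm_restrict \<sigma> S = (\<lambda>i. if i \<in> S then \<sigma> i else i)"

definition Pvec :: "real^'n \<Rightarrow> 'n set set" where
  "Pvec x = (\<lambda>i. {j. x $ j = x $ i}) ` UNIV"

definition Delta :: "('n::finite \<Rightarrow> 'n) \<Rightarrow> (real^'n) set" where
  "Delta \<sigma> = {x. Pvec x = Pperm \<sigma>}"

definition perm_sim :: "('n \<Rightarrow> 'n) \<Rightarrow> ('n \<Rightarrow> 'n) \<Rightarrow> bool" where
  "perm_sim \<sigma> \<sigma>' \<longleftrightarrow> Pperm \<sigma> = Pperm \<sigma>'"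

definition refines :: "'n set set \<Rightarrow> 'n set set \<Rightarrow> bool" where
  "refines Q P \<longleftrightarrow> (\<forall>A\<in>P. \<exists>B. B \<subseteq> Q \<and> A = \<Union>B)"

definition perm_prec :: "('n \<Rightarrow> 'n) \<Rightarrow> ('n \<Rightarrow> 'n) \<Rightarrow> bool" where
  "perm_prec \<sigma> \<sigma>' \<longleftrightarrow> refines (Pperm \<sigma>') (Pperm \<sigma>) \<and> Pperm \<sigma> \<noteq> Pperm \<sigma>'"

definition perm_prec_sim :: "('n \<Rightarrow> 'n) \<Rightarrow> ('n \<Rightarrow> 'n) \<Rightarrow> bool" where
  "perm_prec_sim \<sigma> \<sigma>' \<longleftrightarrow> perm_prec \<sigma> \<sigma>' \<and>
     (\<forall>A\<in>Pperm \<sigma>. A \<notin> Pperm \<sigma>' \<longrightarrow>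
        (\<exists>B. B \<subseteq> Pperm \<sigma>' \<and> A = \<Union>B \<and> (\<forall>b\<in>B. card b = 1)))"

definition decr_cone :: "(real^'n::{finite,linorder}) set" where
  "decr_cone = {x. \<forall>i j. i \<le> j \<longrightarrow> x $ j \<le> x $ i}"

definition locally_symmetric :: "(real^'n::{finite,linorder}) set \<Rightarrow> bool" where
  "locally_symmetric S \<longleftrightarrow> S \<inter> decr_cone \<noteq> {} \<and>
     (\<forall>x\<in>S. \<exists>\<delta>>0. \<forall>y\<in>S \<inter> ball x \<delta>. \<forall>\<sigma>. \<sigma> permutes UNIV \<and> perm_act \<sigma> y = y \<longrightarrow>
        perm_act \<sigma> ` (S \<inter> ball x \<delta>) = S \<inter> ball x \<delta>)"

definition C2_on :: "'a::euclidean_space set \<Rightarrow> ('a \<Rightarrow> 'b::euclidean_space) \<Rightarrow> bool" where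
  "C2_on U f \<longleftrightarrow> (\<exists>f' f''.
      (\<forall>x\<in>U. (f has_derivative blinfun_apply (f' x)) (at x)) \<and>
      (\<forall>x\<in>U. (f' has_derivative blinfun_apply (f'' x)) (at x)) \<and>
      continuous_on U f'')"

definition C2_submanifold :: "(real^'n) set \<Rightarrow> bool" where
  "C2_submanifold M \<longleftrightarrow> (\<forall>x\<in>M. \<exists>U (\<phi> :: real^'n \<Rightarrow> real^'n) \<psi> L. open U \<and> x \<in> U \<and> open (\<phi> ` U) \<and>
      C2_on U \<phi> \<and> C2_on (\<phi> ` U) \<psi> \<and> (\<forall>u\<in>U. \<psi> (\<phi> u) = u) \<and>
      subspace L \<and> \<phi> ` (M \<inter> U) = \<phi> ` U \<inter> L)"

definition locally_symmetric_C2_submanifold :: "(real^'n::{finite,linorder}) set \<Rightarrow> bool" where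
  "locally_symmetric_C2_submanifold M \<longleftrightarrow> connected M \<and> C2_submanifold M \<and> locally_symmetric M"

definition characteristic_perm :: "(real^'n::finite) set \<Rightarrow> ('n \<Rightarrow> 'n) \<Rightarrow> bool" where
  "characteristic_perm M \<sigma>s \<longleftrightarrow> \<sigma>s permutes UNIV \<and> (\<exists>y\<in>M. \<exists>\<rho>>0. M \<inter> ball y \<rho> \<subseteq> Delta \<sigma>s)"

end

theory Submission
  imports Defs
begin

lemma fp_comm: "(f ^^ a) ((f ^^ b) x) = (f ^^ (a + b)) x"
  by (simp add: funpow_add)

lemma cyc_self: "i \<in> cyc s i"
  unfolding cyc_def by (auto intro: exI[of _ 0])

lemma cyc_sub:
  assumes "j \<in> cyc s i" shows "cyc s j \<subseteq> cyc s i"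
proof
  fix x assume "x \<in> cyc s j"
  then obtain a where "x = (s ^^ a) j" unfolding cyc_def by auto
  moreover obtain k where "j = (s ^^ k) i" using assms unfolding cyc_def by auto
  ultimately have "x = (s ^^ (a + k)) i" by (simp add: fp_comm)
  thus "x \<in> cyc s i" unfolding cyc_def by auto
qed

lemma cyc_eq:
  fixes s :: "'n::finite \<Rightarrow> 'n"
  assumes p: "s permutes UNIV" and "j \<in> cyc s i" shows "cyc s j = cyc s i"
proof
  show "cyc s j \<subseteq> cyc s i" using cyc_sub assms(2) .
  have "permutation s" using permutes_imp_permutation[OF finite_class.finite_UNIV p] .
  then obtain N where N: "N > 0" "(s ^^ N) i = i" by (rule permutation_self)
  obtain k where k: "j = (s ^^ k) i" using assms(2) unfolding cyc_def by auto
  have fixN: "((s ^^ N) ^^ m) i = i" for m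
  proof (induction m)
    case 0 show ?case by simp
  next
    case (Suc m)
    have "((s ^^ N) ^^ Suc m) i = (s ^^ N) (((s ^^ N) ^^ m) i)" by (simp only: funpow.simps o_apply)
    also have "\<dots> = i" by (simp only: Suc N(2))
    finally show ?case .
  qed
  have e: "(N - 1) * k + k = N * k" using N(1) by (cases N) simp_all
  have "(s ^^ ((N - 1) * k)) j = (s ^^ ((N - 1) * k + k)) i"
    unfolding k by (rule fp_comm)
  also have "\<dots> = (s ^^ (N * k)) i" by (simp only: e)
  also have "\<dots> = i" using fixN[of k] by (simp only: funpow_mult)
  finally have "i = (s ^^ ((N - 1) * k)) j" by (rule sym)
  hence "i \<in> cyc s j" unfolding cyc_def by blast
  thus "cyc s i \<subseteq> cyc s j" by (rule cyc_sub)
qed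

lemma cyc_fix: "s i = i \<Longrightarrow> cyc s i = {i}"
proof -
  assume h: "s i = i"
  have "(s ^^ k) i = i" for k by (induction k) (auto simp: h)
  thus ?thesis unfolding cyc_def by auto
qed

lemma cyc_single: "cyc s i = {i} \<Longrightarrow> s i = i"
proof -
  assume "cyc s i = {i}"
  moreover have "s i \<in> cyc s i" unfolding cyc_def by (auto intro!: exI[of _ 1])
  ultimately show ?thesis by auto
qed

lemma cyc_restrict:
  assumes "cyc s i \<subseteq> S" shows "cyc (perm_restrict s S) i = cyc s i"
proof -
  have "(perm_restrict s S ^^ k) i = (s ^^ k) i" for k
  proof (induction k)
    case (Suc k)
    have "(s ^^ k) i \<in> S" using assms unfolding cyc_def by auto
    thus ?case using Suc by (simp add: perm_restrict_def)
  qed simp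
  thus ?thesis unfolding cyc_def by auto
qed

lemma cyc_supp:
  fixes s :: "'n::finite \<Rightarrow> 'n"
  assumes p: "s permutes UNIV" and i: "i \<in> psupp s" shows "cyc s i \<subseteq> psupp s"
proof
  fix j assume j: "j \<in> cyc s i"
  show "j \<in> psupp s"
  proof (rule ccontr)
    assume "j \<notin> psupp s"
    hence "s j = j" unfolding psupp_def by auto
    hence "cyc s j = {j}" by (rule cyc_fix)
    moreover have "cyc s j = cyc s i" using cyc_eq[OF p j] .
    ultimately have "cyc s i = {i}" using cyc_self[of i s] by auto
    hence "s i = i" by (rule cyc_single)
    thus False using i unfolding psupp_def by auto
  qed
qed

theorem proposition3p31:
  fixes M :: "(real^'n::{finite,linorder}) set"
    and \<sigma>s \<sigma> :: "'n \<Rightarrow> 'n"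
  assumes "locally_symmetric_C2_submanifold M"
    and "characteristic_perm M \<sigma>s"
    and "\<sigma> permutes UNIV"
    and "\<forall>i. cyc \<sigma> i \<subseteq> UNIV - psupp \<sigma>s \<or> cyc \<sigma> i \<subseteq> psupp \<sigma>s"
  shows "(perm_sim \<sigma> \<sigma>s \<longleftrightarrow>
            (\<forall>i\<in>UNIV - psupp \<sigma>s. \<sigma> i = i) \<and>
            orbit_partition_on (perm_restrict \<sigma> (psupp \<sigma>s)) (psupp \<sigma>s)
              = orbit_partition_on (perm_restrict \<sigma>s (psupp \<sigma>s)) (psupp \<sigma>s))
       \<and> (perm_prec_sim \<sigma> \<sigma>s \<longleftrightarrow>
            \<not> (\<forall>i\<in>UNIV - psupp \<sigma>s. \<sigma> i = i) \<and>
            orbit_partition_on (perm_restrict \<sigma> (psupp \<sigma>s)) (psupp \<sigma>s)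
              = orbit_partition_on (perm_restrict \<sigma>s (psupp \<sigma>s)) (psupp \<sigma>s))"
proof -
  define S where "S = psupp \<sigma>s"
  have ps: "\<sigma>s permutes UNIV" using assms(2) unfolding characteristic_perm_def by auto
  have p: "\<sigma> permutes UNIV" by (rule assms(3))
  have dich: "\<And>i. cyc \<sigma> i \<subseteq> UNIV - S \<or> cyc \<sigma> i \<subseteq> S" using assms(4) S_def by auto
  have sF: "\<And>i. i \<notin> S \<Longrightarrow> cyc \<sigma>s i = {i}"
    by (rule cyc_fix) (simp add: S_def psupp_def)
  have sS: "\<And>i. i \<in> S \<Longrightarrow> cyc \<sigma>s i \<subseteq> S" unfolding S_def by (rule cyc_supp[OF ps])
  have inS: "\<And>i. i \<in> S \<Longrightarrow> cyc \<sigma> i \<subseteq> S" by (metis Diff_iff cyc_self dich subsetD)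
  have inF: "\<And>i. i \<notin> S \<Longrightarrow> cyc \<sigma> i \<subseteq> UNIV - S" by (metis cyc_self dich subsetD)
  define Q where "Q = (\<forall>i\<in>UNIV - S. \<sigma> i = i)"
  define R where "R = (orbit_partition_on (perm_restrict \<sigma> S) S
              = orbit_partition_on (perm_restrict \<sigma>s S) S)"
  have Rdef2: "R \<longleftrightarrow> cyc \<sigma> ` S = cyc \<sigma>s ` S"
    unfolding R_def orbit_partition_on_def
    using cyc_restrict[OF inS] cyc_restrict[OF sS]
    by (metis (no_types, lifting) image_cong)
  have Rpt: "R \<longleftrightarrow> (\<forall>i\<in>S. cyc \<sigma> i = cyc \<sigma>s i)"
  proof
    assume R: R
    show "\<forall>i\<in>S. cyc \<sigma> i = cyc \<sigma>s i"
    proof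
      fix i assume i: "i \<in> S"
      then obtain j where j: "j \<in> S" "cyc \<sigma> i = cyc \<sigma>s j" using R Rdef2 by blast
      hence "i \<in> cyc \<sigma>s j" using cyc_self[of i \<sigma>] by auto
      thus "cyc \<sigma> i = cyc \<sigma>s i" using j cyc_eq[OF ps] by metis
    qed
  next
    assume "\<forall>i\<in>S. cyc \<sigma> i = cyc \<sigma>s i"
    thus R using Rdef2 by auto
  qed
  have memP: "A = cyc s i" if h1: "s permutes UNIV" and h2: "A \<in> Pperm s" and h3: "i \<in> A"
    for s :: "'n \<Rightarrow> 'n" and A i
  proof -
    obtain j where j: "A = cyc s j" using h2 unfolding Pperm_def orbit_partition_on_def by auto
    show ?thesis using cyc_eq[OF h1, of i j] h3 j by simp
  qed
  have Pdef: "\<And>s i. cyc s i \<in> Pperm s" unfolding Pperm_def orbit_partition_on_def by auto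
  have part1: "perm_sim \<sigma> \<sigma>s \<longleftrightarrow> Q \<and> R"
  proof
    assume h: "perm_sim \<sigma> \<sigma>s"
    have eq: "cyc \<sigma> i = cyc \<sigma>s i" for i
    proof -
      have "cyc \<sigma> i \<in> Pperm \<sigma>s" using h Pdef[of \<sigma> i] unfolding perm_sim_def by simp
      thus ?thesis using memP[OF ps _ cyc_self[of i \<sigma>]] by simp
    qed
    have "Q"
      unfolding Q_def
    proof
      fix i assume "i \<in> UNIV - S"
      hence "cyc \<sigma> i = {i}" using eq sF by simp
      thus "\<sigma> i = i" by (rule cyc_single)
    qed
    moreover have R unfolding Rpt using eq by simp
    ultimately show "Q \<and> R" by simp
  next
    assume QR: "Q \<and> R"
    have eq: "cyc \<sigma> i = cyc \<sigma>s i" for i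
    proof (cases "i \<in> S")
      case True thus ?thesis using QR Rpt by simp
    next
      case False
      hence "\<sigma> i = i" using QR Q_def by simp
      hence "cyc \<sigma> i = {i}" by (rule cyc_fix)
      thus ?thesis using sF[OF False] by simp
    qed
    show "perm_sim \<sigma> \<sigma>s" unfolding perm_sim_def Pperm_def orbit_partition_on_def
      using eq by simp
  qed
  have singP: "{k} \<in> Pperm \<sigma>s" if "k \<notin> S" for k
    using sF[OF that] Pdef[of \<sigma>s k] by simp
  have singU: "\<exists>B. B \<subseteq> Pperm \<sigma>s \<and> A = \<Union>B \<and> (\<forall>b\<in>B. card b = 1)"
    if "\<And>k. k \<in> A \<Longrightarrow> k \<notin> S" for A
  proof (intro exI conjI)
    show "(\<lambda>j. {j}) ` A \<subseteq> Pperm \<sigma>s" using singP that by blast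
    show "A = \<Union>((\<lambda>j. {j}) ` A)" by blast
    show "\<forall>b\<in>(\<lambda>j. {j}) ` A. card b = 1" by auto
  qed
  have part2: "perm_prec_sim \<sigma> \<sigma>s \<longleftrightarrow> \<not> Q \<and> R"
  proof
    assume h: "perm_prec_sim \<sigma> \<sigma>s"
    have nsim: "\<not> perm_sim \<sigma> \<sigma>s" using h unfolding perm_prec_sim_def perm_prec_def perm_sim_def by simp
    have hs: "\<forall>A\<in>Pperm \<sigma>. A \<notin> Pperm \<sigma>s \<longrightarrow>
        (\<exists>B. B \<subseteq> Pperm \<sigma>s \<and> A = \<Union>B \<and> (\<forall>b\<in>B. card b = 1))"
      using h unfolding perm_prec_sim_def by simp
    have R
    proof -
      have "cyc \<sigma> i = cyc \<sigma>s i" if i: "i \<in> S" for i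
      proof (rule ccontr)
        assume ne: "cyc \<sigma> i \<noteq> cyc \<sigma>s i"
        have nin: "cyc \<sigma> i \<notin> Pperm \<sigma>s"
        proof
          assume "cyc \<sigma> i \<in> Pperm \<sigma>s"
          hence "cyc \<sigma> i = cyc \<sigma>s i" using memP[OF ps _ cyc_self[of i \<sigma>]] by simp
          thus False using ne by simp
        qed
        have exB: "\<exists>B. B \<subseteq> Pperm \<sigma>s \<and> cyc \<sigma> i = \<Union>B \<and> (\<forall>b\<in>B. card b = 1)"
          using hs[rule_format, OF Pdef[of \<sigma> i] nin] .
        then obtain B where B: "B \<subseteq> Pperm \<sigma>s" "cyc \<sigma> i = \<Union>B" "\<forall>b\<in>B. card b = 1"
          by blast
        obtain b where b: "b \<in> B" "i \<in> b" using cyc_self[of i \<sigma>] B(2) by auto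
        have bP: "b \<in> Pperm \<sigma>s" using B(1) b(1) by blast
        have "b = cyc \<sigma>s i" using memP[OF ps bP b(2)] .
        moreover have "card b = 1" using B(3) b(1) by simp
        ultimately have "cyc \<sigma>s i = {i}" using b(2) by (metis card_1_singletonE singletonD)
        hence "\<sigma>s i = i" by (rule cyc_single)
        thus False using i unfolding S_def psupp_def by simp
      qed
      thus R using Rpt by simp
    qed
    moreover have "\<not> Q" using nsim part1 \<open>R\<close> by simp
    ultimately show "\<not> Q \<and> R" by simp
  next
    assume h: "\<not> Q \<and> R"
    have eqS: "cyc \<sigma> i = cyc \<sigma>s i" if "i \<in> S" for i using h Rpt that by simp
    have ref: "refines (Pperm \<sigma>s) (Pperm \<sigma>)"
      unfolding refines_def
    proof
      fix A assume "A \<in> Pperm \<sigma>"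
      then obtain i where A: "A = cyc \<sigma> i" unfolding Pperm_def orbit_partition_on_def by auto
      show "\<exists>B. B \<subseteq> Pperm \<sigma>s \<and> A = \<Union>B"
      proof (cases "i \<in> S")
        case True
        hence "A \<in> Pperm \<sigma>s" using eqS A Pdef[of \<sigma>s i] by simp
        thus ?thesis by (intro exI[of _ "{A}"]) simp
      next
        case False
        have "\<And>j. j \<in> A \<Longrightarrow> j \<notin> S" using inF[OF False] A by blast
        thus ?thesis using singU by blast
      qed
    qed
    obtain i where i: "i \<notin> S" "\<sigma> i \<noteq> i" using h unfolding Q_def by blast
    have ni: "cyc \<sigma> i \<notin> Pperm \<sigma>s"
    proof
      assume "cyc \<sigma> i \<in> Pperm \<sigma>s"
      hence "cyc \<sigma> i = cyc \<sigma>s i" using memP[OF ps _ cyc_self[of i \<sigma>]] by simp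
      hence "cyc \<sigma> i = {i}" using sF[OF i(1)] by simp
      hence "\<sigma> i = i" by (rule cyc_single)
      thus False using i(2) by simp
    qed
    have neq: "Pperm \<sigma> \<noteq> Pperm \<sigma>s" using ni Pdef[of \<sigma> i] by auto
    have sing: "\<forall>A\<in>Pperm \<sigma>. A \<notin> Pperm \<sigma>s \<longrightarrow>
        (\<exists>B. B \<subseteq> Pperm \<sigma>s \<and> A = \<Union>B \<and> (\<forall>b\<in>B. card b = 1))"
    proof (intro ballI impI)
      fix A assume A1: "A \<in> Pperm \<sigma>" and A2: "A \<notin> Pperm \<sigma>s"
      then obtain j where A: "A = cyc \<sigma> j" unfolding Pperm_def orbit_partition_on_def by auto
      have "j \<notin> S"
      proof
        assume "j \<in> S"
        hence "A \<in> Pperm \<sigma>s" using eqS A Pdef[of \<sigma>s j] by simp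
        thus False using A2 by simp
      qed
      hence "\<And>k. k \<in> A \<Longrightarrow> k \<notin> S" using inF A by blast
      thus "\<exists>B. B \<subseteq> Pperm \<sigma>s \<and> A = \<Union>B \<and> (\<forall>b\<in>B. card b = 1)"
        using singU by blast
    qed
    show "perm_prec_sim \<sigma> \<sigma>s" unfolding perm_prec_sim_def perm_prec_def
      using ref neq sing by simp
  qed
  show ?thesis using part1 part2 unfolding Q_def R_def S_def by auto
qed

end
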